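(* For all $t_1, t_2 \in \mathcal{L}_r$, $t_1 =_{\mathcal{L}} t_2$ if and only if $t_1 = t_2$ (i.e. they have the same set of sublevels).
   Context: $\mathcal{X}$ is a countable set of variables; a valuation is $\sigma\colon\mathcal{X}\to\mathbb{N}$. For finite $E\subseteq\mathcal{X}$, $x\in\mathcal{X}$, $S\in\mathbb{N}$, the sublevels $A(E,x,S)$ and $B(E,S)$ have values $[A(E,x,S)]_\sigma = 0$ if some $y\in E$ has $\sigma(y)=0$, and $\sigma(x)+S$ otherwise; $[B(E,S)]_\sigma=0$ if some $y\in E$ has $\sigma(y)=0$, and $S$ otherwise. $\mathcal{L}_s$ is the set of sublevels $A(E,x,S)$ with $x\in E$ and $B(E,S)$ with $S>0$. $t_1\leqslant_{\mathcal{L}} t_2$ (resp. $t_1 =_{\mathcal{L}} t_2$) means $[t_1]_\sigma\le[t_2]_\sigma$ (resp. $=$) for every valuation $\sigma$; $\max$ of a finite family is evaluated pointwise (empty max has value $0$). Two sublevels $u,v$ are incomparable if neither $u\leqslant_{\mathcal{L}} v$ nor $v\leqslant_{\mathcal{L}} u$. A minimal representation is a formal expression $\max(u_1,\ldots,u_n)$ where $\{u_1,\ldots,u_n\}$ is a finite set of pairwise incomparable elements of $\mathcal{L}_s$; $\mathcal{L}_r$ is the set of minimal representations. *)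

theory Defs
  imports Main "HOL-Library.Countable"
begin

datatype 'x sublevel = A "'x set" 'x nat | B "'x set" nat

fun sval :: "'x sublevel \<Rightarrow> ('x \<Rightarrow> nat) \<Rightarrow> nat" where
  "sval (A E x S) \<sigma> = (if \<exists>y\<in>E. \<sigma> y = 0 then 0 else \<sigma> x + S)"
| "sval (B E S) \<sigma> = (if \<exists>y\<in>E. \<sigma> y = 0 then 0 else S)"

definition sub_le :: "'x sublevel \<Rightarrow> 'x sublevel \<Rightarrow> bool" where
  "sub_le u v \<longleftrightarrow> (\<forall>\<sigma>. sval u \<sigma> \<le> sval v \<sigma>)"

definition incomparable :: "'x sublevel \<Rightarrow> 'x sublevel \<Rightarrow> bool" where
  "incomparable u v \<longleftrightarrow> \<not> sub_le u v \<and> \<not> sub_le v u"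

fun in_Ls :: "'x sublevel \<Rightarrow> bool" where
  "in_Ls (A E x S) \<longleftrightarrow> finite E \<and> x \<in> E"
| "in_Ls (B E S) \<longleftrightarrow> finite E \<and> S > 0"

text \<open>A minimal representation max(u_1,...,u_n) is identified with its finite set of sublevels.\<close>
definition in_Lr :: "'x sublevel set \<Rightarrow> bool" where
  "in_Lr T \<longleftrightarrow> finite T \<and> (\<forall>u\<in>T. in_Ls u) \<and>
     (\<forall>u\<in>T. \<forall>v\<in>T. u \<noteq> v \<longrightarrow> incomparable u v)"

definition rval :: "'x sublevel set \<Rightarrow> ('x \<Rightarrow> nat) \<Rightarrow> nat" where
  "rval T \<sigma> = Max (insert 0 ((\<lambda>u. sval u \<sigma>) ` T))"

definition rep_eq :: "'x sublevel set \<Rightarrow> 'x sublevel set \<Rightarrow> bool" where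
  "rep_eq T1 T2 \<longleftrightarrow> (\<forall>\<sigma>. rval T1 \<sigma> = rval T2 \<sigma>)"

end

theory Submission
  imports Defs
begin

fun sE :: "'x sublevel \<Rightarrow> 'x set" where
  "sE (A E x S) = E" | "sE (B E S) = E"

fun sc :: "'x sublevel \<Rightarrow> nat" where
  "sc (A E x S) = S" | "sc (B E S) = S"

lemma pos_iff: "in_Ls w \<Longrightarrow> (sval w \<sigma> > 0) \<longleftrightarrow> (\<forall>y\<in>sE w. \<sigma> y \<noteq> 0)"
  by (cases w) auto

lemma zero_if: "y \<in> sE w \<Longrightarrow> \<sigma> y = 0 \<Longrightarrow> sval w \<sigma> = 0"
  by (cases w) auto

lemma antisym_s:
  assumes u: "in_Ls u" and v: "in_Ls v" and eq: "\<And>\<sigma>. sval u \<sigma> = sval v \<sigma>"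
  shows "u = v"
proof -
  have E: "sE u = sE v"
  proof (rule ccontr)
    assume "sE u \<noteq> sE v"
    then obtain y where "(y \<in> sE u \<and> y \<notin> sE v) \<or> (y \<in> sE v \<and> y \<notin> sE u)" by blast
    then show False
    proof
      assume h: "y \<in> sE u \<and> y \<notin> sE v"
      let ?s = "\<lambda>z. if z = y then 0 else 1::nat"
      have "sval v ?s > 0" using pos_iff[OF v, of ?s] h by auto
      moreover have "sval u ?s = 0" using zero_if[of y u ?s] h by auto
      ultimately show False using eq[of ?s] by simp
    next
      assume h: "y \<in> sE v \<and> y \<notin> sE u"
      let ?s = "\<lambda>z. if z = y then 0 else 1::nat"
      have "sval u ?s > 0" using pos_iff[OF u, of ?s] h by auto
      moreover have "sval v ?s = 0" using zero_if[of y v ?s] h by auto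
      ultimately show False using eq[of ?s] by simp
    qed
  qed
  show ?thesis
  proof (cases u)
    case (A E x S)
    note uA = A
    show ?thesis
    proof (cases v)
      case (A E' x' S')
      have EE: "E' = E" using E uA A by simp
      show ?thesis
      proof (cases "x = x'")
        case True
        have "sval u (\<lambda>z. 1) = sval v (\<lambda>z. 1)" by (rule eq)
        then show ?thesis using uA A EE True by simp
      next
        case False
        have "sval u (\<lambda>z. if z = x then 3 else 1) = sval v (\<lambda>z. if z = x then 3 else 1)" by (rule eq)
        moreover have "sval u (\<lambda>z. if z = x' then 3 else 1) = sval v (\<lambda>z. if z = x' then 3 else 1)" by (rule eq)
        ultimately show ?thesis using uA A EE False by (simp split: if_splits)
      qed
    next
      case (B E' S')
      have "sval u (\<lambda>z. 1) = sval v (\<lambda>z. 1)" by (rule eq)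
      moreover have "sval u (\<lambda>z. if z = x then 2 else 1) = sval v (\<lambda>z. if z = x then 2 else 1)" by (rule eq)
      ultimately show ?thesis using uA B by (simp split: if_splits)
    qed
  next
    case (B E S)
    note uB = B
    show ?thesis
    proof (cases v)
      case (A E' x' S')
      have "sval u (\<lambda>z. 1) = sval v (\<lambda>z. 1)" by (rule eq)
      moreover have "sval u (\<lambda>z. if z = x' then 2 else 1) = sval v (\<lambda>z. if z = x' then 2 else 1)" by (rule eq)
      ultimately show ?thesis using uB A by (simp split: if_splits)
    next
      case (B E' S')
      have "sval u (\<lambda>z. 1) = sval v (\<lambda>z. 1)" by (rule eq)
      then show ?thesis using uB B E by simp
    qed
  qed
qed

lemma rval_attained:
  assumes "finite T" "rval T \<sigma> > 0"
  shows "\<exists>v\<in>T. sval v \<sigma> = rval T \<sigma>"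
proof -
  have "rval T \<sigma> \<in> insert 0 ((\<lambda>u. sval u \<sigma>) ` T)"
    unfolding rval_def using assms(1) by (intro Max_in) auto
  then show ?thesis using assms(2) by auto
qed

lemma rval_ge: "finite T \<Longrightarrow> u \<in> T \<Longrightarrow> sval u \<sigma> \<le> rval T \<sigma>"
  unfolding rval_def by (intro Max_ge) auto

lemma dominated:
  assumes t1: "in_Lr t1" and t2: "in_Lr t2" and req: "rep_eq t1 t2" and uin: "u \<in> t1"
  shows "\<exists>v\<in>t2. sub_le u v"
proof -
  have f1: "finite t1" and f2: "finite t2" using t1 t2 unfolding in_Lr_def by auto
  have uL: "in_Ls u" using t1 uin unfolding in_Lr_def by auto
  have L2: "\<And>v. v \<in> t2 \<Longrightarrow> in_Ls v" using t2 unfolding in_Lr_def by auto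
  have key: "\<exists>v\<in>t2. sval v \<sigma> \<ge> sval u \<sigma>" if "sval u \<sigma> > 0" for \<sigma>
  proof -
    have "rval t1 \<sigma> \<ge> sval u \<sigma>" by (rule rval_ge[OF f1 uin])
    moreover have "rval t1 \<sigma> = rval t2 \<sigma>" using req unfolding rep_eq_def by auto
    ultimately have "rval t2 \<sigma> > 0" "rval t2 \<sigma> \<ge> sval u \<sigma>" using that by auto
    then show ?thesis using rval_attained[OF f2] by metis
  qed
  show ?thesis
  proof (cases u)
    case (A E x S)
    note uA = A
    define N where "N = Suc (Suc (\<Sum>v\<in>t2. sc v))"
    have cN: "sc v + 2 \<le> N" if "v \<in> t2" for v
      using member_le_sum[of v t2 sc] that f2 unfolding N_def by simp
    define \<sigma> where "\<sigma> = (\<lambda>z. if z = x then N else if z \<in> E then 1 else 0::nat)"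
    have "sval u \<sigma> = N + S" using A uL unfolding \<sigma>_def N_def by auto
    then obtain v where v: "v \<in> t2" "sval v \<sigma> \<ge> N + S"
      using key[of \<sigma>] unfolding N_def by auto
    have vpos: "sval v \<sigma> > 0" using v unfolding N_def by simp
    have sub: "sE v \<subseteq> E"
    proof
      fix y assume "y \<in> sE v"
      then have "\<sigma> y \<noteq> 0" using pos_iff[OF L2[OF v(1)]] vpos by auto
      then show "y \<in> E" using A uL unfolding \<sigma>_def by (auto split: if_splits)
    qed
    show ?thesis
    proof (cases v)
      case (A E' x' S')
      note A2 = A
      have "x' \<in> E'" using L2[OF v(1)] A2 by simp
      then have "\<sigma> x' \<noteq> 0" using pos_iff[OF L2[OF v(1)]] vpos A2 by auto
      have xx: "x' = x"
      proof (rule ccontr)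
        assume "x' \<noteq> x"
        then have "\<sigma> x' \<le> 1" unfolding \<sigma>_def by auto
        moreover have "\<sigma> x' + S' \<ge> N + S" using v(2) vpos A2 by (auto split: if_splits)
        moreover have "S' + 2 \<le> N" using cN[OF v(1)] A2 by simp
        ultimately show False by simp
      qed
      have "\<sigma> x + S' \<ge> N + S" using v(2) vpos A2 xx by (auto split: if_splits)
      then have SS: "S' \<ge> S" unfolding \<sigma>_def by simp
      have "sub_le u v" unfolding sub_le_def
      proof
        fix \<tau>
        show "sval u \<tau> \<le> sval v \<tau>"
        proof (cases "\<exists>y\<in>E. \<tau> y = 0")
          case True
          then show ?thesis using uA by simp
        next
          case False
          then have "\<not>(\<exists>y\<in>E'. \<tau> y = 0)" using sub A2 by auto
          then show ?thesis using uA A2 xx SS False by auto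
        qed
      qed
      then show ?thesis using v(1) by blast
    next
      case (B E' S')
      note B2 = B
      have "S' \<ge> N + S" using v(2) vpos B2 by (auto split: if_splits)
      moreover have "S' + 2 \<le> N" using cN[OF v(1)] B2 by simp
      ultimately show ?thesis by simp
    qed
  next
    case (B E S)
    note uB = B
    define \<sigma> where "\<sigma> = (\<lambda>z. if z \<in> E then 1 else 0::nat)"
    have "sval u \<sigma> = S" using B unfolding \<sigma>_def by auto
    moreover have "S > 0" using B uL by simp
    ultimately obtain v where v: "v \<in> t2" "sval v \<sigma> \<ge> S"
      using key[of \<sigma>] by auto
    have vpos: "sval v \<sigma> > 0" using v \<open>S > 0\<close> by simp
    have sub: "sE v \<subseteq> E"
    proof
      fix y assume "y \<in> sE v"
      then have "\<sigma> y \<noteq> 0" using pos_iff[OF L2[OF v(1)]] vpos by auto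
      then show "y \<in> E" unfolding \<sigma>_def by (auto split: if_splits)
    qed
    show ?thesis
    proof (cases v)
      case (A E' x' S')
      note A2 = A
      have xin: "x' \<in> E'" using L2[OF v(1)] A2 by simp
      have "\<sigma> x' + S' \<ge> S" using v(2) vpos A2 by (auto split: if_splits)
      then have SS: "1 + S' \<ge> S" using xin sub A2 unfolding \<sigma>_def by auto
      have "sub_le u v" unfolding sub_le_def
      proof
        fix \<tau>
        show "sval u \<tau> \<le> sval v \<tau>"
        proof (cases "\<exists>y\<in>E'. \<tau> y = 0")
          case True
          then have "\<exists>y\<in>E. \<tau> y = 0" using sub A2 by auto
          then show ?thesis using uB by simp
        next
          case False
          then have "\<tau> x' \<ge> 1" using xin by (metis less_one not_less)
          then show ?thesis using uB A2 SS False by auto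
        qed
      qed
      then show ?thesis using v(1) by blast
    next
      case (B E' S')
      note B2 = B
      have SS: "S' \<ge> S" using v(2) vpos B2 by (auto split: if_splits)
      have "sub_le u v" unfolding sub_le_def
      proof
        fix \<tau>
        show "sval u \<tau> \<le> sval v \<tau>"
        proof (cases "\<exists>y\<in>E. \<tau> y = 0")
          case True
          then show ?thesis using uB by simp
        next
          case False
          then have "\<not>(\<exists>y\<in>E'. \<tau> y = 0)" using sub B2 by auto
          then show ?thesis using uB B2 SS False by auto
        qed
      qed
      then show ?thesis using v(1) by blast
    qed
  qed
qed

lemma sub_le_trans: "sub_le u v \<Longrightarrow> sub_le v w \<Longrightarrow> sub_le u w"
  unfolding sub_le_def using le_trans by blast

lemma one_dir:
  assumes t1: "in_Lr t1" and t2: "in_Lr t2" and req: "rep_eq t1 t2"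
  shows "t1 \<subseteq> t2"
proof
  fix u assume uin: "u \<in> t1"
  have req': "rep_eq t2 t1" using req unfolding rep_eq_def by auto
  obtain v where v: "v \<in> t2" "sub_le u v" using dominated[OF t1 t2 req uin] by blast
  obtain u' where u': "u' \<in> t1" "sub_le v u'" using dominated[OF t2 t1 req' v(1)] by blast
  have "sub_le u u'" using sub_le_trans v u' by blast
  then have "u = u'" using t1 uin u'(1) unfolding in_Lr_def incomparable_def by blast
  then have "\<And>\<sigma>. sval u \<sigma> = sval v \<sigma>" using v(2) u'(2) unfolding sub_le_def
    by (metis le_antisym)
  then have "u = v" using antisym_s t1 t2 uin v(1) unfolding in_Lr_def by blast
  then show "u \<in> t2" using v(1) by simp
qed

theorem proposition33:
  fixes t1 t2 :: "('x::countable) sublevel set"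
  assumes "in_Lr t1" and "in_Lr t2"
  shows "rep_eq t1 t2 \<longleftrightarrow> t1 = t2"
proof
  assume r: "rep_eq t1 t2"
  then have "rep_eq t2 t1" unfolding rep_eq_def by auto
  then show "t1 = t2" using one_dir[OF assms r] one_dir[OF assms(2,1)] by blast
next
  assume "t1 = t2" then show "rep_eq t1 t2" unfolding rep_eq_def by simp
qed

end
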